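(* Let $W$ be a positive real-valued càdlàg stochastic process on $[0,T]$ with finite $p$-variation almost surely ($p\ge1$), and suppose that almost surely the range of $W$ on $[0,T]$ is contained in a compact interval $[m,M]\subset(0,\infty)$. Let $n:=\lfloor p\rfloor$. Then almost surely the RRS limit $$\int_0^T\frac1{W_t}\,d\mathbf W_t:=\mathrm{RRS}\text{-}\lim_\Pi\sum_{[t_i,t_{i+1}]\in\Pi}\sum_{k=1}^n\frac{(-1)^{k-1}}{k}\Big(\frac{W_{t_{i+1}}-W_{t_i}}{W_{t_i}}\Big)^k$$ exists and $$\log W_T-\log W_0=\int_0^T\frac1{W_t}\,d\mathbf W_t+\sum_{0<t\le T}\Big(\log\Big(1+\frac{\Delta^-_tW}{W_{t-}}\Big)-\sum_{k=1}^n\frac{(-1)^{k-1}}{k}\Big(\frac{\Delta^-_tW}{W_{t-}}\Big)^k\Big),$$ the series converging absolutely.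
   Context: $p$-variation: $\|W\|_{p\text{-var};[0,T]}:=(\sup_\Pi\sum|W_{t_{i+1}}-W_{t_i}|^p)^{1/p}$ over partitions $\Pi$ of $[0,T]$. $W_{t-}:=\lim_{u\uparrow t}W_u$, $\Delta^-_tW:=W_t-W_{t-}$. RRS convergence: sums $S(\Pi)$ converge to $K$ if for every $\varepsilon>0$ there is a partition $\Pi_\varepsilon$ with $|S(\Pi)-K|<\varepsilon$ for every partition $\Pi\supset\Pi_\varepsilon$. *)

theory Defs
  imports "HOL-Probability.Probability"
begin

definition is_partition :: "real \<Rightarrow> real set \<Rightarrow> bool" where
  "is_partition T P \<longleftrightarrow> finite P \<and> P \<subseteq> {0..T} \<and> 0 \<in> P \<and> T \<in> P"

definition nxt :: "real set \<Rightarrow> real \<Rightarrow> real" where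
  "nxt P t = Min {s \<in> P. t < s}"

definition psum :: "real \<Rightarrow> real set \<Rightarrow> (real \<Rightarrow> real \<Rightarrow> real) \<Rightarrow> real" where
  "psum T P f = (\<Sum>t\<in>P - {T}. f t (nxt P t))"

definition finite_pvar :: "real \<Rightarrow> real \<Rightarrow> (real \<Rightarrow> real) \<Rightarrow> bool" where
  "finite_pvar p T W \<longleftrightarrow>
     bdd_above {psum T P (\<lambda>s t. \<bar>W t - W s\<bar> powr p) | P. is_partition T P}"

definition pvar :: "real \<Rightarrow> real \<Rightarrow> (real \<Rightarrow> real) \<Rightarrow> real" where
  "pvar p T W = (SUP P\<in>{P. is_partition T P}. psum T P (\<lambda>s t. \<bar>W t - W s\<bar> powr p)) powr (1/p)"

definition cadlag_on :: "real \<Rightarrow> (real \<Rightarrow> real) \<Rightarrow> bool" where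
  "cadlag_on T W \<longleftrightarrow>
     (\<forall>t\<in>{0..<T}. (W \<longlongrightarrow> W t) (at_right t)) \<and>
     (\<forall>t\<in>{0<..T}. \<exists>l. (W \<longlongrightarrow> l) (at_left t))"

definition left_lim :: "(real \<Rightarrow> real) \<Rightarrow> real \<Rightarrow> real" where
  "left_lim W t = Lim (at_left t) W"

definition jump :: "(real \<Rightarrow> real) \<Rightarrow> real \<Rightarrow> real" where
  "jump W t = W t - left_lim W t"

definition rrs_converges :: "real \<Rightarrow> (real set \<Rightarrow> real) \<Rightarrow> real \<Rightarrow> bool" where
  "rrs_converges T S K \<longleftrightarrow>
     (\<forall>\<epsilon>>0. \<exists>P\<epsilon>. is_partition T P\<epsilon> \<and>
        (\<forall>P. is_partition T P \<and> P\<epsilon> \<subseteq> P \<longrightarrow> \<bar>S P - K\<bar> < \<epsilon>))"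

definition logser :: "nat \<Rightarrow> real \<Rightarrow> real" where
  "logser n x = (\<Sum>k=1..n. (-1) ^ (k - 1) / real k * x ^ k)"

definition jump_corr :: "nat \<Rightarrow> (real \<Rightarrow> real) \<Rightarrow> real \<Rightarrow> real" where
  "jump_corr n W t = ln (1 + jump W t / left_lim W t) - logser n (jump W t / left_lim W t)"

end

theory Submission
  imports Defs
begin

definition Rr :: "nat \<Rightarrow> real \<Rightarrow> real" where
  "Rr n x = ln (1 + x) - logser n x"
lemma logser_deriv:
  "(logser n has_real_derivative (\<Sum>k=1..n. (-x)^(k-1))) (at x)"
proof -
  have "((\<lambda>x. \<Sum>k=1..n. (-1) ^ (k - 1) / real k * x ^ k) has_real_derivative
        (\<Sum>k=1..n. (-1) ^ (k - 1) / real k * (real k * x ^ (k - 1)))) (at x)"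
    by (intro DERIV_sum DERIV_cmult) (auto intro!: derivative_eq_intros)
  moreover have "(\<Sum>k=1..n. (-1) ^ (k - 1) / real k * (real k * x ^ (k - 1))) = (\<Sum>k=1..n. (-x)^(k-1))"
  proof (intro sum.cong refl)
    fix k assume "k \<in> {1..n}"
    then have "(-1) ^ (k - 1) / real k * (real k * x ^ (k - 1)) = (-1) ^ (k - 1) * x ^ (k - 1)"
      by simp
    also have "\<dots> = (-x)^(k-1)" by (rule power_minus[symmetric])
    finally show "(-1) ^ (k - 1) / real k * (real k * x ^ (k - 1)) = (-x)^(k-1)" .
  qed
  ultimately show ?thesis unfolding logser_def[abs_def] by simp
qed
lemma geom_aux: "(\<Sum>k=1..n. (-x)^(k-1)) * (1+x) = 1 - (-x::real)^n"
  by (induction n) (auto simp: algebra_simps)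

lemma Rr_deriv:
  assumes "0 < 1 + x"
  shows "(Rr n has_real_derivative ((-x)^n / (1+x))) (at x)"
proof -
  have "(Rr n has_real_derivative (1 / (1+x) - (\<Sum>k=1..n. (-x)^(k-1)))) (at x)"
    unfolding Rr_def[abs_def]
  proof (rule DERIV_diff[OF _ logser_deriv])
    show "((\<lambda>x. ln (1 + x)) has_real_derivative 1 / (1 + x)) (at x)"
      using assms by (auto intro!: derivative_eq_intros)
  qed
  moreover have "1 / (1+x) - (\<Sum>k=1..n. (-x)^(k-1)) = (-x)^n / (1+x)"
    using geom_aux[where n=n and x=x] assms by (simp add: field_simps)
  ultimately show ?thesis by simp
qed

lemma Rr_diff_aux:
  fixes x y a :: real
  assumes "0 < a" "a - 1 \<le> x" "x < y"
  shows "\<bar>Rr n y - Rr n x\<bar> \<le> \<bar>y - x\<bar> * max \<bar>x\<bar> \<bar>y\<bar> ^ n / a"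
proof -
  obtain z where z: "x < z" "z < y" "Rr n y - Rr n x = (y - x) * ((-z)^n / (1+z))"
    using MVT2[OF assms(3), of "Rr n" "\<lambda>z. (-z)^n / (1+z)"] Rr_deriv assms by force
  have "\<bar>(-z)^n / (1+z)\<bar> = \<bar>z\<bar>^n / (1+z)" using z assms by (simp add: power_abs)
  also have "\<dots> \<le> max \<bar>x\<bar> \<bar>y\<bar> ^ n / a"
  proof (rule frac_le)
    show "\<bar>z\<bar>^n \<le> max \<bar>x\<bar> \<bar>y\<bar> ^ n" using z by (intro power_mono) auto
  qed (use z assms in auto)
  finally have "\<bar>(-z)^n / (1+z)\<bar> \<le> max \<bar>x\<bar> \<bar>y\<bar> ^ n / a" .
  then have "\<bar>y - x\<bar> * \<bar>(-z)^n / (1+z)\<bar> \<le> \<bar>y - x\<bar> * (max \<bar>x\<bar> \<bar>y\<bar> ^ n / a)"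
    by (intro mult_left_mono) auto
  then show ?thesis unfolding z(3) abs_mult by simp
qed

lemma Rr_diff:
  fixes x y a :: real
  assumes "0 < a" "a - 1 \<le> x" "a - 1 \<le> y"
  shows "\<bar>Rr n x - Rr n y\<bar> \<le> \<bar>x - y\<bar> * max \<bar>x\<bar> \<bar>y\<bar> ^ n / a"
proof (cases x y rule: linorder_cases)
  case less then show ?thesis using Rr_diff_aux[OF assms(1,2) less, of n]
    by (simp add: abs_minus_commute)
next
  case greater then show ?thesis using Rr_diff_aux[OF assms(1,3) greater, of n]
    by (simp add: abs_minus_commute max.commute)
qed simp

lemma Rr_0: "Rr n 0 = 0" by (simp add: Rr_def logser_def)

lemma Rr_bound:
  fixes x a :: real
  assumes "0 < a" "a - 1 \<le> x" "a \<le> 1"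
  shows "\<bar>Rr n x\<bar> \<le> \<bar>x\<bar> ^ Suc n / a"
proof (cases "x = 0")
  case True then show ?thesis by (simp add: Rr_0)
next
  case False
  then show ?thesis using Rr_diff[OF assms(1,2), of 0 n] assms by (simp add: Rr_0 max_def)
qed

lemma part_lt: "is_partition T P \<Longrightarrow> s \<in> P - {T} \<Longrightarrow> s < T"
  unfolding is_partition_def by force

lemma part_ge0: "is_partition T P \<Longrightarrow> s \<in> P \<Longrightarrow> 0 \<le> s"
  unfolding is_partition_def by force

lemma nxt_props:
  assumes "is_partition T P" "s \<in> P" "s < T"
  shows "nxt P s \<in> P" "s < nxt P s" "\<And>r. r \<in> P \<Longrightarrow> s < r \<Longrightarrow> nxt P s \<le> r"
proof -
  have f: "finite {r\<in>P. s<r}" and ne: "{r\<in>P. s<r} \<noteq> {}"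
    using assms unfolding is_partition_def by auto
  have "nxt P s \<in> {r\<in>P. s<r}" unfolding nxt_def using Min_in[OF f ne] .
  then show "nxt P s \<in> P" "s < nxt P s" by auto
  show "\<And>r. r \<in> P \<Longrightarrow> s < r \<Longrightarrow> nxt P s \<le> r"
    unfolding nxt_def using f by (intro Min_le) auto
qed

lemma nxt_eqI:
  assumes "finite P" "v \<in> P" "s < v" "\<And>r. r \<in> P \<Longrightarrow> s < r \<Longrightarrow> v \<le> r"
  shows "nxt P s = v"
  unfolding nxt_def using assms by (intro Min_eqI) auto

lemma nxt_inj:
  assumes "is_partition T P"
  shows "inj_on (nxt P) (P - {T})"
proof (rule inj_onI)
  fix x y assume x: "x \<in> P - {T}" and y: "y \<in> P - {T}" and e: "nxt P x = nxt P y"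
  have xT: "x < T" and yT: "y < T" using part_lt[OF assms] x y by auto
  show "x = y"
  proof (cases x y rule: linorder_cases)
    case less
    have "nxt P x \<le> y" using nxt_props(3)[OF assms _ xT, of y] x y less by auto
    moreover have "y < nxt P y" using nxt_props(2)[OF assms _ yT] y by auto
    ultimately show ?thesis using e by simp
  next
    case greater
    have "nxt P y \<le> x" using nxt_props(3)[OF assms _ yT, of x] x y greater by auto
    moreover have "x < nxt P x" using nxt_props(2)[OF assms _ xT] x by auto
    ultimately show ?thesis using e by simp
  qed simp
qed

lemma nxt_surj:
  assumes "is_partition T P" "v \<in> P" "0 < v"
  shows "\<exists>s\<in>P - {T}. nxt P s = v"
proof -
  have f: "finite {r\<in>P. r<v}" and ne: "{r\<in>P. r<v} \<noteq> {}"
    using assms unfolding is_partition_def by auto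
  define s where "s = Max {r\<in>P. r<v}"
  have s: "s \<in> P" "s < v" using Max_in[OF f ne] unfolding s_def by auto
  have "v \<le> T" using assms unfolding is_partition_def by auto
  then have "s \<noteq> T" using s by auto
  moreover have "nxt P s = v"
  proof (rule nxt_eqI)
    show "finite P" using assms unfolding is_partition_def by auto
    fix r assume r: "r \<in> P" "s < r"
    show "v \<le> r"
    proof (rule ccontr)
      assume "\<not> v \<le> r"
      then have "r \<le> s" unfolding s_def using f r by (intro Max_ge) auto
      then show False using r by simp
    qed
  qed (use assms s in auto)
  ultimately show ?thesis using s by auto
qed

lemma nxt_bij:
  assumes "is_partition T P" "0 < T"
  shows "bij_betw (nxt P) (P - {T}) (P - {0})"
proof (rule bij_betw_imageI)
  show "inj_on (nxt P) (P - {T})" by (rule nxt_inj[OF assms(1)])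
  show "nxt P ` (P - {T}) = P - {0}"
  proof
    show "nxt P ` (P - {T}) \<subseteq> P - {0}"
    proof
      fix v assume "v \<in> nxt P ` (P - {T})"
      then obtain s where s: "s \<in> P - {T}" "v = nxt P s" by auto
      have "s < T" using part_lt[OF assms(1) s(1)] .
      then have "v \<in> P" "s < v" using nxt_props[OF assms(1), of s] s by auto
      moreover have "0 \<le> s" using part_ge0[OF assms(1)] s by auto
      ultimately show "v \<in> P - {0}" by auto
    qed
    show "P - {0} \<subseteq> nxt P ` (P - {T})"
    proof
      fix v assume v: "v \<in> P - {0}"
      then have "0 < v" using part_ge0[OF assms(1), of v] by auto
      then show "v \<in> nxt P ` (P - {T})" using nxt_surj[OF assms(1), of v] v by force
    qed
  qed
qed

lemma psum_telescope:
  assumes "is_partition T P" "0 < T"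
  shows "psum T P (\<lambda>s t. f t - f s) = f T - f 0"
proof -
  have fin: "finite P" and T: "T \<in> P" and z: "0 \<in> P"
    using assms unfolding is_partition_def by auto
  have "psum T P (\<lambda>s t. f t - f s) = (\<Sum>s\<in>P - {T}. f (nxt P s)) - (\<Sum>s\<in>P - {T}. f s)"
    unfolding psum_def by (simp add: sum_subtractf)
  also have "(\<Sum>s\<in>P - {T}. f (nxt P s)) = (\<Sum>v\<in>P - {0}. f v)"
    using sum.reindex_bij_betw[OF nxt_bij[OF assms], of f] by simp
  also have "(\<Sum>v\<in>P - {0}. f v) = f T + (\<Sum>v\<in>P - {0} - {T}. f v)"
    using fin T assms(2) by (subst sum.remove[of _ T]) auto
  also have "(\<Sum>s\<in>P - {T}. f s) = f 0 + (\<Sum>v\<in>P - {T} - {0}. f v)"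
    using fin z assms(2) by (subst sum.remove[of _ 0]) auto
  also have "P - {T} - {0} = P - {0} - {T}" by auto
  finally show ?thesis by simp
qed

definition good :: "(real \<Rightarrow> real) \<Rightarrow> real \<Rightarrow> real \<Rightarrow> real set \<Rightarrow> bool" where
  "good W \<delta> \<tau> P \<longleftrightarrow> finite P \<and> P \<subseteq> {0..\<tau>} \<and> 0 \<in> P \<and>
     (\<forall>x y. 0 \<le> x \<longrightarrow> x < y \<longrightarrow> y \<le> \<tau> \<longrightarrow> {x<..y} \<inter> P = {} \<longrightarrow> \<bar>W y - W x\<bar> < \<delta>)"

lemma osc:
  assumes cad: "cadlag_on T W" and T: "0 < T" and d: "0 < \<delta>"
  shows "\<exists>P. good W \<delta> T P"
proof -
  let ?G = "\<lambda>\<tau>. \<exists>P. good W \<delta> \<tau> P"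
  have g0: "?G 0" by (rule exI[of _ "{0}"]) (auto simp: good_def)
  have gmono: "?G \<tau>'" if Gt: "?G \<tau>" and tt: "0 \<le> \<tau>'" "\<tau>' \<le> \<tau>" for \<tau> \<tau>'
  proof -
 obtain P where P: "good W \<delta> \<tau> P" using Gt by blast
    have "good W \<delta> \<tau>' (P \<inter> {0..\<tau>'})"
      unfolding good_def
    proof (intro conjI allI impI)
      fix x y assume xy: "0 \<le> x" "x < y" "y \<le> \<tau>'" "{x<..y} \<inter> (P \<inter> {0..\<tau>'}) = {}"
      then have "{x<..y} \<inter> P = {}" by auto
      then show "\<bar>W y - W x\<bar> < \<delta>" using P xy tt unfolding good_def by auto
    qed (use P tt in \<open>auto simp: good_def\<close>)
    then show ?thesis by blast
  qed
  have gright: "\<exists>h>0. ?G (\<tau> + h)" if tt: "0 \<le> \<tau>" "\<tau> < T" and Gt: "?G \<tau>" for \<tau>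
  proof -
    obtain P where P: "good W \<delta> \<tau> P" using Gt by blast
    have "(W \<longlongrightarrow> W \<tau>) (at_right \<tau>)" using cad tt unfolding cadlag_on_def by auto
    then have "eventually (\<lambda>y. dist (W y) (W \<tau>) < \<delta>/2) (at_right \<tau>)"
      using d by (intro tendstoD) auto
    then obtain b where b: "b > \<tau>" "\<And>y. y > \<tau> \<Longrightarrow> y < b \<Longrightarrow> \<bar>W y - W \<tau>\<bar> < \<delta>/2"
      unfolding eventually_at_right_field dist_real_def by auto
    define h where "h = (b - \<tau>) / 2"
    have h: "h > 0" "\<tau> + h < b" using b(1) unfolding h_def by (auto simp: field_simps)
    have "good W \<delta> (\<tau> + h) (insert \<tau> P)"
      unfolding good_def
    proof (intro conjI allI impI)
      fix x y assume xy: "0 \<le> x" "x < y" "y \<le> \<tau> + h" "{x<..y} \<inter> insert \<tau> P = {}"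
      show "\<bar>W y - W x\<bar> < \<delta>"
      proof (cases "y \<le> \<tau>")
        case True
        then show ?thesis using P xy unfolding good_def by auto
      next
        case False
        then have "\<tau> \<le> x" using xy by auto
        have 1: "\<bar>W y - W \<tau>\<bar> < \<delta>/2" using b(2)[of y] False xy h by auto
        have 2: "\<bar>W x - W \<tau>\<bar> < \<delta>/2"
        proof (cases "x = \<tau>")
          case True then show ?thesis using d by simp
        next
          case False then show ?thesis using b(2)[of x] \<open>\<tau> \<le> x\<close> xy h by auto
        qed
        show ?thesis using 1 2 by linarith
      qed
    qed (use P tt h in \<open>auto simp: good_def\<close>)
    then show ?thesis using h by blast
  qed
  define S where "S = {\<tau>. 0 \<le> \<tau> \<and> \<tau> \<le> T \<and> ?G \<tau>}"
  define \<sigma> where "\<sigma> = Sup S"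
  have S0: "0 \<in> S" using g0 T unfolding S_def by auto
  have Sne: "S \<noteq> {}" using S0 by auto
  have Sbdd: "bdd_above S" unfolding S_def by (rule bdd_aboveI[of _ T]) auto
  have \<sigma>T: "\<sigma> \<le> T" unfolding \<sigma>_def using Sne by (intro cSup_least) (auto simp: S_def)
  have \<sigma>0: "0 \<le> \<sigma>" unfolding \<sigma>_def using S0 Sbdd by (intro cSup_upper2[of 0]) auto
  have G\<sigma>: "?G \<sigma>"
  proof (cases "\<sigma> = 0")
    case True then show ?thesis using g0 by simp
  next
    case False
    then have \<sigma>pos: "0 < \<sigma>" using \<sigma>0 by simp
    have "\<sigma> \<in> {0<..T}" using \<sigma>pos \<sigma>T by simp
    then obtain L where L: "(W \<longlongrightarrow> L) (at_left \<sigma>)" using cad unfolding cadlag_on_def by blast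
    then have "eventually (\<lambda>y. dist (W y) L < \<delta>/2) (at_left \<sigma>)"
      using d by (intro tendstoD) auto
    then obtain b where b: "b < \<sigma>" "\<And>y. y > b \<Longrightarrow> y < \<sigma> \<Longrightarrow> \<bar>W y - L\<bar> < \<delta>/2"
      unfolding eventually_at_left_field dist_real_def by auto
    have "max b 0 < Sup S" using b \<sigma>pos unfolding \<sigma>_def by auto
    then obtain \<tau> where \<tau>: "\<tau> \<in> S" "max b 0 < \<tau>" using less_cSup_iff[OF Sne Sbdd] by auto
    have "\<tau> \<le> \<sigma>" unfolding \<sigma>_def using \<tau> Sbdd by (intro cSup_upper) auto
    show ?thesis
    proof (cases "\<tau> = \<sigma>")
      case True then show ?thesis using \<tau> unfolding S_def by auto
    next
      case False
      then have \<tau>\<sigma>: "\<tau> < \<sigma>" using \<open>\<tau> \<le> \<sigma>\<close> by simp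
      obtain P where P: "good W \<delta> \<tau> P" using \<tau> unfolding S_def by auto
      have "good W \<delta> \<sigma> (P \<union> {\<tau>, \<sigma>})"
        unfolding good_def
      proof (intro conjI allI impI)
        fix x y assume xy: "0 \<le> x" "x < y" "y \<le> \<sigma>" "{x<..y} \<inter> (P \<union> {\<tau>, \<sigma>}) = {}"
        show "\<bar>W y - W x\<bar> < \<delta>"
        proof (cases "y \<le> \<tau>")
          case True
          then show ?thesis using P xy unfolding good_def by auto
        next
          case False
          then have "\<tau> \<le> x" "y < \<sigma>" using xy by auto
          then have "\<bar>W y - L\<bar> < \<delta>/2" "\<bar>W x - L\<bar> < \<delta>/2"
            using b(2)[of x] b(2)[of y] \<tau> xy by auto
          then show ?thesis by linarith
        qed
      qed (use P \<tau> \<tau>\<sigma> in \<open>auto simp: good_def S_def\<close>)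
      then show ?thesis by blast
    qed
  qed
  have "\<sigma> = T"
  proof (rule ccontr)
    assume "\<sigma> \<noteq> T"
    then have "\<sigma> < T" using \<sigma>T by simp
    then obtain h where h: "h > 0" "?G (\<sigma> + h)" using gright[OF \<sigma>0 _ G\<sigma>] by auto
    have "?G (min (\<sigma> + h) T)" using gmono[OF h(2)] \<sigma>0 h(1) T by auto
    then have "min (\<sigma> + h) T \<in> S" unfolding S_def using \<sigma>0 h T by auto
    then have "min (\<sigma> + h) T \<le> \<sigma>" unfolding \<sigma>_def using Sbdd by (intro cSup_upper) auto
    then show False using h \<open>\<sigma> < T\<close> by linarith
  qed
  then show ?thesis using G\<sigma> by simp
qed

lemma left_lim_eq:
  assumes "cadlag_on T W" "v \<in> {0<..T}"
  shows "(W \<longlongrightarrow> left_lim W v) (at_left v)"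
proof -
  obtain l where l: "(W \<longlongrightarrow> l) (at_left v)" using assms unfolding cadlag_on_def by blast
  have "left_lim W v = l" unfolding left_lim_def using tendsto_Lim[OF trivial_limit_at_left_real l] .
  then show ?thesis using l by simp
qed

lemma left_lim_bounds:
  assumes "cadlag_on T W" "v \<in> {0<..T}" "\<forall>t\<in>{0..T}. W t \<in> {m..Mx}"
  shows "m \<le> left_lim W v" "left_lim W v \<le> Mx"
proof -
  have ev: "eventually (\<lambda>s. s \<in> {0<..<v}) (at_left v)"
    using assms(2) by (intro eventually_at_left_real) auto
  have ev2: "eventually (\<lambda>s. W s \<in> {m..Mx}) (at_left v)"
    using ev by eventually_elim (use assms in auto)
  show "m \<le> left_lim W v"
    by (rule tendsto_lowerbound[OF left_lim_eq[OF assms(1,2)] _ trivial_limit_at_left_real])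
       (use ev2 in \<open>eventually_elim, auto\<close>)
  show "left_lim W v \<le> Mx"
    by (rule tendsto_upperbound[OF left_lim_eq[OF assms(1,2)] _ trivial_limit_at_left_real])
       (use ev2 in \<open>eventually_elim, auto\<close>)
qed

lemma jump_small:
  assumes cad: "cadlag_on T W" and g: "good W \<delta> T P1" and v: "v \<in> {0<..T}" "v \<notin> P1"
  shows "\<bar>W v - left_lim W v\<bar> \<le> \<delta>"
proof -
  have f: "finite {r\<in>P1. r<v}" and ne: "{r\<in>P1. r<v} \<noteq> {}"
    using g v unfolding good_def by auto
  define u where "u = Max {r\<in>P1. r<v}"
  have u: "u \<in> P1" "u < v" using Max_in[OF f ne] unfolding u_def by auto
  have u0: "0 \<le> u" using u g unfolding good_def by auto
  have ev: "eventually (\<lambda>s. s \<in> {u<..<v}) (at_left v)"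
    using u by (intro eventually_at_left_real) auto
  have ev2: "eventually (\<lambda>s. \<bar>W v - W s\<bar> \<le> \<delta>) (at_left v)"
    using ev
  proof eventually_elim
    case (elim s)
    have "{s<..v} \<inter> P1 = {}"
    proof (rule ccontr)
      assume "{s<..v} \<inter> P1 \<noteq> {}"
      then obtain r where r: "r \<in> P1" "s < r" "r \<le> v" by auto
      then have "r < v" using v by (cases "r = v") auto
      then have "r \<le> u" unfolding u_def using f r by (intro Max_ge) auto
      then show False using r elim by auto
    qed
    moreover have H: "\<And>x y. 0 \<le> x \<Longrightarrow> x < y \<Longrightarrow> y \<le> T \<Longrightarrow> {x<..y} \<inter> P1 = {} \<Longrightarrow> \<bar>W y - W x\<bar> < \<delta>"
      using g unfolding good_def by blast
    ultimately have "\<bar>W v - W s\<bar> < \<delta>" using elim u0 v by auto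
    then show ?case by simp
  qed
  have "((\<lambda>s. \<bar>W v - W s\<bar>) \<longlongrightarrow> \<bar>W v - left_lim W v\<bar>) (at_left v)"
    by (intro tendsto_intros left_lim_eq[OF cad v(1)])
  from tendsto_upperbound[OF this ev2 trivial_limit_at_left_real] show ?thesis .
qed

lemma left_shift_tendsto:
  fixes v :: real
  assumes "(W \<longlongrightarrow> L) (at_left v)"
  shows "((\<lambda>h. W (v - h)) \<longlongrightarrow> L) (at_right 0)"
proof -
  have "filterlim (\<lambda>h. v - h) (at_left v) (at_right (0::real))"
    unfolding filterlim_at
  proof
    show "\<forall>\<^sub>F h in at_right 0. v - h \<in> {..<v} \<and> v - h \<noteq> v"
      using eventually_at_right_less[of "0::real"] by eventually_elim auto
    have "((\<lambda>h. v - h) \<longlongrightarrow> v - 0) (at_right (0::real))"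
      by (intro tendsto_intros)
    then show "((\<lambda>h. v - h) \<longlongrightarrow> v) (at_right 0)" by simp
  qed
  from filterlim_compose[OF assms this] show ?thesis .
qed

lemma jump_psum_bound:
  assumes cad: "cadlag_on T W" and T: "0 < T" and p: "0 < p"
    and V: "\<And>P. is_partition T P \<Longrightarrow> psum T P (\<lambda>s t. \<bar>W t - W s\<bar> powr p) \<le> V"
    and F: "finite F" "F \<subseteq> {0<..T}"
  shows "(\<Sum>v\<in>F. \<bar>W v - left_lim W v\<bar> powr p) \<le> V"
proof -
  have lim: "((\<lambda>h. \<Sum>v\<in>F. \<bar>W v - W (v - h)\<bar> powr p) \<longlongrightarrow> (\<Sum>v\<in>F. \<bar>W v - left_lim W v\<bar> powr p)) (at_right 0)"
  proof (intro tendsto_sum)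
    fix v assume "v \<in> F"
    then have v: "v \<in> {0<..T}" using F by auto
    have "((\<lambda>h. \<bar>W v - W (v - h)\<bar>) \<longlongrightarrow> \<bar>W v - left_lim W v\<bar>) (at_right 0)"
      by (intro tendsto_intros left_shift_tendsto left_lim_eq[OF cad v])
    then show "((\<lambda>h. \<bar>W v - W (v - h)\<bar> powr p) \<longlongrightarrow> \<bar>W v - left_lim W v\<bar> powr p) (at_right 0)"
      using p by (intro tendsto_powr') auto
  qed
  define D where "D = insert 0 F"
  have finD: "finite D" using F unfolding D_def by auto
  have evgap: "eventually (\<lambda>h. \<forall>x\<in>D. \<forall>y\<in>D. x \<noteq> y \<longrightarrow> h < \<bar>x - y\<bar>) (at_right (0::real))"
  proof (intro eventually_ball_finite finD ballI)
    fix x y assume "x \<in> D" "y \<in> D"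
    show "eventually (\<lambda>h. x \<noteq> y \<longrightarrow> h < \<bar>x - y\<bar>) (at_right 0)"
    proof (cases "x = y")
      case True then show ?thesis by simp
    next
      case False
      then have "0 < \<bar>x - y\<bar>" by simp
      from order_tendstoD(2)[OF tendsto_ident_at this, of "{0<..}"]
      show ?thesis by eventually_elim auto
    qed
  qed
  have ev: "eventually (\<lambda>h. (\<Sum>v\<in>F. \<bar>W v - W (v - h)\<bar> powr p) \<le> V) (at_right 0)"
    using evgap eventually_at_right_less[of "0::real"]
  proof eventually_elim
    case (elim h)
    define Ph where "Ph = {0, T} \<union> F \<union> (\<lambda>v. v - h) ` F"
    have Fpos: "h < v" if v: "v \<in> F" for v
    proof -
      have "v \<in> D" "0 \<in> D" using v unfolding D_def by auto
      moreover have "0 < v" using v F by auto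
      ultimately have "h < \<bar>v - 0\<bar>" using elim(1) by (metis less_irrefl)
      then show ?thesis using \<open>0 < v\<close> by simp
    qed
    have FT: "v \<le> T" if "v \<in> F" for v using that F by auto
    have part: "is_partition T Ph"
      unfolding is_partition_def
    proof (intro conjI)
      show "finite Ph" unfolding Ph_def using F by simp
      show "Ph \<subseteq> {0..T}"
      proof
        fix x assume "x \<in> Ph"
        then consider "x = 0" | "x = T" | "x \<in> F" | v where "v \<in> F" "x = v - h"
          unfolding Ph_def by auto
        then show "x \<in> {0..T}"
        proof cases
          case 4 then show ?thesis using Fpos[of v] FT[of v] elim(2) by auto
        qed (use T FT F in auto)
      qed
    qed (auto simp: Ph_def)
    have finPh: "finite Ph" using part unfolding is_partition_def by auto
    have nx: "nxt Ph (v - h) = v" if v: "v \<in> F" for v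
    proof (rule nxt_eqI[OF finPh])
      show "v \<in> Ph" using v unfolding Ph_def by auto
      show "v - h < v" using elim(2) by simp
      fix r assume r: "r \<in> Ph" "v - h < r"
      have vD: "v \<in> D" using v unfolding D_def by auto
      show "v \<le> r"
      proof (rule ccontr)
        assume nr: "\<not> v \<le> r"
        consider "r = 0" | "r = T" | "r \<in> F" | w where "w \<in> F" "r = w - h"
          using r(1) unfolding Ph_def by auto
        then show False
        proof cases
          case 1 then show False using r Fpos[OF v] by simp
        next
          case 2 then show False using nr v F by auto
        next
          case 3
          then have "r \<in> D" unfolding D_def by auto
          moreover have "v \<noteq> r" using nr by auto
          ultimately have "h < \<bar>v - r\<bar>" using elim(1) vD by blast
          then show False using r nr by auto
        next
          case 4
          then have "w \<in> D" unfolding D_def by auto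
          moreover have "w \<noteq> v" using 4 r(2) by auto
          ultimately have "h < \<bar>v - w\<bar>" using elim(1) vD by auto
          then show False using r nr 4 by auto
        qed
      qed
    qed
    have inj: "inj_on (\<lambda>v. v - h) F" by (auto simp: inj_on_def)
    have sub: "(\<lambda>v. v - h) ` F \<subseteq> Ph - {T}"
    proof
      fix x assume "x \<in> (\<lambda>v. v - h) ` F"
      then obtain v where v: "v \<in> F" "x = v - h" by auto
      then show "x \<in> Ph - {T}" using FT[OF v(1)] elim(2) unfolding Ph_def by auto
    qed
    have "(\<Sum>v\<in>F. \<bar>W v - W (v - h)\<bar> powr p) = (\<Sum>s\<in>(\<lambda>v. v - h) ` F. \<bar>W (nxt Ph s) - W s\<bar> powr p)"
      by (subst sum.reindex[OF inj]) (auto simp: nx intro!: sum.cong)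
    also have "\<dots> \<le> (\<Sum>s\<in>Ph - {T}. \<bar>W (nxt Ph s) - W s\<bar> powr p)"
      using finPh sub by (intro sum_mono2) auto
    also have "\<dots> = psum T Ph (\<lambda>s t. \<bar>W t - W s\<bar> powr p)" unfolding psum_def ..
    also have "\<dots> \<le> V" by (rule V[OF part])
    finally show ?case .
  qed
  from tendsto_upperbound[OF lim ev trivial_limit_at_right_real] show ?thesis .
qed

lemma ratio_bounds:
  fixes m Mx u w :: real
  assumes m: "0 < m" and u: "m \<le> u" "u \<le> Mx" and w: "m \<le> w" "w \<le> Mx"
  shows "m/Mx - 1 \<le> (w-u)/u" "\<bar>(w-u)/u\<bar> \<le> Mx/m" "(w-u)/u = w/u - 1"
proof -
  have u0: "0 < u" using m u by simp
  show e: "(w-u)/u = w/u - 1" using u0 by (simp add: field_simps)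
  have "m/Mx \<le> w/u" using m u w by (intro frac_le) auto
  then show "m/Mx - 1 \<le> (w-u)/u" unfolding e by simp
  have "w/u \<le> Mx/m" using m u w by (intro frac_le) auto
  moreover have "0 \<le> w/u" using u0 w m by simp
  moreover have "1 \<le> Mx/m" using m u by simp
  ultimately show "\<bar>(w-u)/u\<bar> \<le> Mx/m" unfolding e by linarith
qed

lemma Rr_small:
  fixes m Mx u w \<delta> p :: real
  assumes m: "0 < m" and u: "m \<le> u" "u \<le> Mx" and w: "m \<le> w" "w \<le> Mx"
    and d: "\<bar>w - u\<bar> \<le> \<delta>" and p: "0 < p" "p < real n + 1"
  shows "\<bar>Rr n ((w-u)/u)\<bar> \<le> (\<delta>/m) powr (real n + 1 - p) / ((m/Mx) * m powr p) * \<bar>w-u\<bar> powr p"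
proof -
  define a where "a = m/Mx"
  define x where "x = (w-u)/u"
  have u0: "0 < u" using m u by simp
  have a0: "0 < a" "a \<le> 1" using m u unfolding a_def by auto
  have ax: "a - 1 \<le> x" using ratio_bounds[OF m u w] unfolding a_def x_def by simp
  have b: "\<bar>Rr n x\<bar> \<le> \<bar>x\<bar> ^ Suc n / a" by (rule Rr_bound[OF a0(1) ax a0(2)])
  have rhs0: "0 \<le> (\<delta>/m) powr (real n + 1 - p) / (a * m powr p) * \<bar>w-u\<bar> powr p"
    using a0 m by simp
  show ?thesis
  proof (cases "x = 0")
    case True
    then have "Rr n ((w-u)/u) = 0" unfolding x_def using Rr_0 by metis
    then show ?thesis using rhs0 unfolding a_def by simp
  next
    case False
    then have xpos: "0 < \<bar>x\<bar>" by simp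
    have "\<bar>x\<bar> ^ Suc n = \<bar>x\<bar> powr (real (Suc n))" by (rule powr_realpow[OF xpos, symmetric])
    also have "\<dots> = \<bar>x\<bar> powr p * \<bar>x\<bar> powr (real n + 1 - p)"
      by (simp add: powr_add[symmetric] add.commute)
    finally have e1: "\<bar>x\<bar> ^ Suc n = \<bar>x\<bar> powr p * \<bar>x\<bar> powr (real n + 1 - p)" .
    have xd: "\<bar>x\<bar> \<le> \<delta>/m"
    proof -
      have "\<bar>x\<bar> = \<bar>w-u\<bar>/u" unfolding x_def using u0 by simp
      also have "\<dots> \<le> \<delta>/m" using d m u by (intro frac_le) auto
      finally show ?thesis .
    qed
    have e2: "\<bar>x\<bar> powr (real n + 1 - p) \<le> (\<delta>/m) powr (real n + 1 - p)"
      using xd p by (intro powr_mono2) auto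
    have "\<bar>x\<bar> powr p = \<bar>w-u\<bar> powr p / u powr p"
      unfolding x_def using u0 by (simp add: powr_divide)
    also have "\<dots> \<le> \<bar>w-u\<bar> powr p / m powr p"
      using m u p by (intro divide_left_mono powr_mono2 mult_pos_pos) auto
    finally have e3: "\<bar>x\<bar> powr p \<le> \<bar>w-u\<bar> powr p / m powr p" .
    have "\<bar>x\<bar> ^ Suc n \<le> (\<bar>w-u\<bar> powr p / m powr p) * (\<delta>/m) powr (real n + 1 - p)"
      unfolding e1 by (intro mult_mono e2 e3) auto
    then have "\<bar>x\<bar> ^ Suc n / a \<le> (\<bar>w-u\<bar> powr p / m powr p) * (\<delta>/m) powr (real n + 1 - p) / a"
      using a0 by (intro divide_right_mono) auto
    also have "\<dots> = (\<delta>/m) powr (real n + 1 - p) / (a * m powr p) * \<bar>w-u\<bar> powr p"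
      by (simp add: field_simps)
    finally show ?thesis using b unfolding x_def a_def by linarith
  qed
qed

lemma Rr_lip:
  fixes m Mx u w L :: real
  assumes m: "0 < m" and u: "m \<le> u" "u \<le> Mx" and w: "m \<le> w" "w \<le> Mx" and L: "m \<le> L" "L \<le> Mx"
  shows "\<bar>Rr n ((w-u)/u) - Rr n ((w-L)/L)\<bar> \<le> Mx/m^2 * ((Mx/m)^n / (m/Mx)) * \<bar>L - u\<bar>"
proof -
  define a where "a = m/Mx"
  have a0: "0 < a" using m u unfolding a_def by auto
  have bx: "a - 1 \<le> (w-u)/u" "\<bar>(w-u)/u\<bar> \<le> Mx/m" using ratio_bounds[OF m u w] unfolding a_def by auto
  have by': "a - 1 \<le> (w-L)/L" "\<bar>(w-L)/L\<bar> \<le> Mx/m" using ratio_bounds[OF m L w] unfolding a_def by auto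
  have "\<bar>Rr n ((w-u)/u) - Rr n ((w-L)/L)\<bar> \<le> \<bar>(w-u)/u - (w-L)/L\<bar> * max \<bar>(w-u)/u\<bar> \<bar>(w-L)/L\<bar> ^ n / a"
    by (rule Rr_diff[OF a0 bx(1) by'(1)])
  also have "\<dots> \<le> (Mx/m^2 * \<bar>L - u\<bar>) * (Mx/m) ^ n / a"
  proof -
    have u0: "0 < u" "0 < L" using m u L by auto
    have "(w-u)/u - (w-L)/L = w * (L - u) / (u * L)" using u0 by (simp add: field_simps)
    then have "\<bar>(w-u)/u - (w-L)/L\<bar> = w * \<bar>L - u\<bar> / (u * L)" using u0 w m by (simp add: abs_mult)
    also have "\<dots> \<le> Mx * \<bar>L - u\<bar> / (m * m)"
      using u0 m u w L by (intro frac_le mult_mono) auto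
    finally have 1: "\<bar>(w-u)/u - (w-L)/L\<bar> \<le> Mx/m^2 * \<bar>L - u\<bar>" by (simp add: power2_eq_square)
    have 2: "max \<bar>(w-u)/u\<bar> \<bar>(w-L)/L\<bar> ^ n \<le> (Mx/m)^n"
      by (intro power_mono max.boundedI[OF bx(2) by'(2)]) (metis abs_ge_zero max.coboundedI1)
    have 3: "0 \<le> max \<bar>(w-u)/u\<bar> \<bar>(w-L)/L\<bar> ^ n" by (intro zero_le_power) (simp add: le_max_iff_disj)
    have 4: "0 \<le> Mx/m^2 * \<bar>L - u\<bar>" using m u by simp
    have "\<bar>(w-u)/u - (w-L)/L\<bar> * max \<bar>(w-u)/u\<bar> \<bar>(w-L)/L\<bar> ^ n \<le> (Mx/m^2 * \<bar>L - u\<bar>) * (Mx/m) ^ n"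
      by (rule mult_mono[OF 1 2 4 3])
    then show ?thesis using a0 by (intro divide_right_mono) auto
  qed
  also have "\<dots> = Mx/m^2 * ((Mx/m)^n / (m/Mx)) * \<bar>L - u\<bar>" unfolding a_def by simp
  finally show ?thesis .
qed

lemma det:
  fixes W :: "real \<Rightarrow> real" and p T m Mx :: real
  assumes p: "1 \<le> p" and T: "0 < T" and cad: "cadlag_on T W" and pv: "finite_pvar p T W"
    and m: "0 < m" and rng: "\<forall>t\<in>{0..T}. W t \<in> {m..Mx}"
  shows "\<exists>K. rrs_converges T (\<lambda>P. psum T P (\<lambda>s t. logser (nat \<lfloor>p\<rfloor>) ((W t - W s) / W s))) K
             \<and> ((\<lambda>t. \<bar>jump_corr (nat \<lfloor>p\<rfloor>) W t\<bar>) summable_on {0<..T})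
             \<and> ln (W T) - ln (W 0) = K + (\<Sum>\<^sub>\<infinity>t\<in>{0<..T}. jump_corr (nat \<lfloor>p\<rfloor>) W t)"
proof -
  define n where "n = nat \<lfloor>p\<rfloor>"
  have fl0: "0 \<le> \<lfloor>p\<rfloor>" using p by simp
  have rn: "real n = of_int \<lfloor>p\<rfloor>" unfolding n_def using fl0 by simp
  have np: "p < real n + 1" unfolding rn using floor_correct[of p] by simp
  have p0: "0 < p" using p by simp
  define e where "e = real n + 1 - p"
  have e0: "0 < e" unfolding e_def using np by simp
  have Wb: "m \<le> W t" "W t \<le> Mx" if "t \<in> {0..T}" for t using rng that by auto
  have mM: "m \<le> Mx" using Wb[of 0] T by auto
  have Mx0: "0 < Mx" using m mM by simp
  obtain V where V: "\<And>P. is_partition T P \<Longrightarrow> psum T P (\<lambda>s t. \<bar>W t - W s\<bar> powr p) \<le> V"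
    using pv unfolding finite_pvar_def bdd_above_def by blast
  have part0: "is_partition T {0, T}" unfolding is_partition_def using T by auto
  have V0: "0 \<le> V"
  proof -
    have "0 \<le> psum T {0, T} (\<lambda>s t. \<bar>W t - W s\<bar> powr p)" unfolding psum_def by (intro sum_nonneg) auto
    then show ?thesis using V[OF part0] by linarith
  qed
  define L where "L v = left_lim W v" for v
  have Lb: "m \<le> L v" "L v \<le> Mx" if "v \<in> {0<..T}" for v
    using left_lim_bounds[OF cad that rng] unfolding L_def by auto
  define jc where "jc = jump_corr n W"
  have jc_eq: "jc v = Rr n ((W v - L v) / L v)" for v
    by (simp add: jc_def jump_corr_def Rr_def jump_def L_def)
  define g where "g \<delta> = (\<delta>/m) powr e / ((m/Mx) * m powr p)" for \<delta>
  have g0: "0 \<le> g \<delta>" for \<delta> unfolding g_def using m Mx0 by simp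
  have jsmall: "\<bar>jc v\<bar> \<le> g \<delta> * \<bar>W v - L v\<bar> powr p" if v: "v \<in> {0<..T}" and d: "\<bar>W v - L v\<bar> \<le> \<delta>" for v \<delta>
  proof -
    have vT: "v \<in> {0..T}" using v by auto
    show ?thesis unfolding jc_eq g_def e_def
      by (rule Rr_small[OF m Lb[OF v] Wb[OF vT] d p0 np])
  qed
  have jsum: "(\<Sum>v\<in>F. \<bar>W v - L v\<bar> powr p) \<le> V" if "finite F" "F \<subseteq> {0<..T}" for F
    unfolding L_def using jump_psum_bound[OF cad T p0 V that] .
  have jMx: "\<bar>W v - L v\<bar> \<le> Mx" if v: "v \<in> {0<..T}" for v
  proof -
    have vT: "v \<in> {0..T}" using v by auto
    show ?thesis using Wb[OF vT] Lb[OF v] m by linarith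
  qed
  have finbound: "(\<Sum>v\<in>F. \<bar>jc v\<bar>) \<le> g \<delta> * V"
    if F: "finite F" "F \<subseteq> {0<..T}" and d: "\<And>v. v \<in> F \<Longrightarrow> \<bar>W v - L v\<bar> \<le> \<delta>" for F \<delta>
  proof -
    have "(\<Sum>v\<in>F. \<bar>jc v\<bar>) \<le> (\<Sum>v\<in>F. g \<delta> * \<bar>W v - L v\<bar> powr p)"
      using F d by (intro sum_mono jsmall) auto
    also have "\<dots> = g \<delta> * (\<Sum>v\<in>F. \<bar>W v - L v\<bar> powr p)" by (simp add: sum_distrib_left)
    also have "\<dots> \<le> g \<delta> * V" by (intro mult_left_mono jsum F g0)
    finally show ?thesis .
  qed
  have summ: "(\<lambda>t. \<bar>jc t\<bar>) summable_on {0<..T}"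
  proof (rule nonneg_bdd_above_summable_on)
    show "bdd_above (sum (\<lambda>t. \<bar>jc t\<bar>) ` {F. F \<subseteq> {0<..T} \<and> finite F})"
      by (rule bdd_aboveI[of _ "g Mx * V"]) (use finbound jMx in blast)
  qed auto
  have summ2: "jc summable_on {0<..T}"
    by (rule abs_summable_summable) (use summ in simp)
  define S where "S = infsum jc {0<..T}"
  define K where "K = ln (W T) - ln (W 0) - S"
  have rrs: "rrs_converges T (\<lambda>P. psum T P (\<lambda>s t. logser n ((W t - W s) / W s))) K"
    unfolding rrs_converges_def
  proof (intro allI impI)
    fix \<epsilon> :: real assume \<epsilon>: "\<epsilon> > 0"
    have lim1: "((\<lambda>\<delta>. (\<delta>/m) powr e) \<longlongrightarrow> (0/m) powr e) (at_right 0)"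
    proof (rule tendsto_powr')
      show "((\<lambda>\<delta>. \<delta>/m) \<longlongrightarrow> 0/m) (at_right 0)" using m by (intro tendsto_intros) auto
      show "0/m \<noteq> 0 \<or> 0 < e \<and> (\<forall>\<^sub>F \<delta> in at_right 0. 0 \<le> \<delta>/m)"
        using e0 eventually_at_right_less[of "0::real"] m
        by (auto elim!: eventually_mono)
    qed (use m in auto)
    have lim1': "((\<lambda>\<delta>. (\<delta>/m) powr e) \<longlongrightarrow> 0) (at_right 0)" using lim1 by simp
    have lim2: "((\<lambda>\<delta>. (\<delta>/m) powr e * (V / ((m/Mx) * m powr p))) \<longlongrightarrow> 0) (at_right 0)"
      by (rule tendsto_mult_left_zero[OF lim1'])
    have "eventually (\<lambda>\<delta>. (\<delta>/m) powr e * (V / ((m/Mx) * m powr p)) < \<epsilon>/3) (at_right 0)"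
      using order_tendstoD(2)[OF lim2, of "\<epsilon>/3"] \<epsilon> by simp
    then have "eventually (\<lambda>\<delta>. 0 < \<delta> \<and> g \<delta> * V < \<epsilon>/3) (at_right 0)"
      using eventually_at_right_less[of "0::real"]
      by eventually_elim (simp add: g_def mult_ac)
    then obtain \<delta> where \<delta>: "0 < \<delta>" "g \<delta> * V < \<epsilon>/3"
      using eventually_happens'[OF trivial_limit_at_right_real] by blast
    obtain P0 where P0: "good W \<delta> T P0" using osc[OF cad T \<delta>(1)] by blast
    define P1 where "P1 = insert T P0"
    have gP0: "\<And>x y. 0 \<le> x \<Longrightarrow> x < y \<Longrightarrow> y \<le> T \<Longrightarrow> {x<..y} \<inter> P0 = {} \<Longrightarrow> \<bar>W y - W x\<bar> < \<delta>"
      using P0 unfolding good_def by blast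
    have gP1: "good W \<delta> T P1"
      unfolding good_def
    proof (intro conjI allI impI)
      fix x y assume xy: "0 \<le> x" "x < y" "y \<le> T" "{x<..y} \<inter> P1 = {}"
      then have "{x<..y} \<inter> P0 = {}" unfolding P1_def by blast
      then show "\<bar>W y - W x\<bar> < \<delta>" using gP0 xy by blast
    qed (use P0 T in \<open>auto simp: good_def P1_def\<close>)
    have gP1': "\<And>x y. 0 \<le> x \<Longrightarrow> x < y \<Longrightarrow> y \<le> T \<Longrightarrow> {x<..y} \<inter> P1 = {} \<Longrightarrow> \<bar>W y - W x\<bar> < \<delta>"
      using gP1 unfolding good_def by blast
    have P1fin: "finite P1" and P1sub: "P1 \<subseteq> {0..T}" and P10: "0 \<in> P1" and P1T: "T \<in> P1"
      using gP1 unfolding good_def P1_def by auto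
    define J where "J = P1 - {0}"
    have finJ: "finite J" using P1fin unfolding J_def by simp
    have Jsub: "J \<subseteq> {0<..T}" using P1sub unfolding J_def by force
    have TJ: "T \<in> J" using P1T T unfolding J_def by simp
    define C1 where "C1 = Mx/m^2 * ((Mx/m)^n / (m/Mx))"
    have C10: "0 \<le> C1" unfolding C1_def using m Mx0 by simp
    define \<delta>2 where "\<delta>2 = \<epsilon> / (3 * (C1 * real (card J) + 1))"
    have D0: "0 < C1 * real (card J) + 1"
      using C10 by (metis add_nonneg_pos mult_nonneg_nonneg of_nat_0_le_iff zero_less_one)
    have \<delta>2: "0 < \<delta>2" unfolding \<delta>2_def using \<epsilon> D0 by (intro divide_pos_pos mult_pos_pos) auto
    have C1J: "C1 * real (card J) * \<delta>2 < \<epsilon>/3"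
    proof -
      have "C1 * real (card J) * \<delta>2 = (\<epsilon>/3) * (C1 * real (card J) / (C1 * real (card J) + 1))"
        unfolding \<delta>2_def by (simp add: field_simps)
      also have "\<dots> < (\<epsilon>/3) * 1"
        using \<epsilon> D0 by (intro mult_strict_left_mono) auto
      finally show ?thesis by simp
    qed
    have "\<forall>v\<in>J. \<exists>\<eta>>0. \<forall>s. v - \<eta> < s \<and> s < v \<longrightarrow> \<bar>W s - L v\<bar> < \<delta>2"
    proof
      fix v assume "v \<in> J"
      then have v: "v \<in> {0<..T}" using Jsub by auto
      have "eventually (\<lambda>s. dist (W s) (L v) < \<delta>2) (at_left v)"
        using left_lim_eq[OF cad v] \<delta>2 unfolding L_def by (intro tendstoD) auto
      then obtain b where b: "b < v" "\<And>s. s > b \<Longrightarrow> s < v \<Longrightarrow> \<bar>W s - L v\<bar> < \<delta>2"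
        unfolding eventually_at_left_field dist_real_def by auto
      show "\<exists>\<eta>>0. \<forall>s. v - \<eta> < s \<and> s < v \<longrightarrow> \<bar>W s - L v\<bar> < \<delta>2"
        by (rule exI[of _ "v - b"]) (use b in auto)
    qed
    then obtain \<eta>f where \<eta>f: "\<And>v. v \<in> J \<Longrightarrow> \<eta>f v > 0"
      "\<And>v s. v \<in> J \<Longrightarrow> v - \<eta>f v < s \<Longrightarrow> s < v \<Longrightarrow> \<bar>W s - L v\<bar> < \<delta>2"
      by metis
    define \<eta> where "\<eta> = Min (\<eta>f ` J \<union> J) / 2"
    have finM: "finite (\<eta>f ` J \<union> J)" using finJ by simp
    have neM: "\<eta>f ` J \<union> J \<noteq> {}" using TJ by auto
    have Mpos: "0 < Min (\<eta>f ` J \<union> J)"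
      using finM neM \<eta>f(1) Jsub by (subst Min_gr_iff) force+
    have \<eta>0: "0 < \<eta>" unfolding \<eta>_def using Mpos by simp
    have \<eta>lt: "\<eta> < \<eta>f v" "\<eta> < v" if "v \<in> J" for v
    proof -
      have "Min (\<eta>f ` J \<union> J) \<le> \<eta>f v" "Min (\<eta>f ` J \<union> J) \<le> v"
        using that finM by (auto intro: Min_le)
      then show "\<eta> < \<eta>f v" "\<eta> < v" unfolding \<eta>_def using Mpos by auto
    qed
    define P\<epsilon> where "P\<epsilon> = P1 \<union> (\<lambda>v. v - \<eta>) ` J"
    have part\<epsilon>: "is_partition T P\<epsilon>"
      unfolding is_partition_def
    proof (intro conjI)
      show "finite P\<epsilon>" unfolding P\<epsilon>_def using P1fin finJ by simp
      show "P\<epsilon> \<subseteq> {0..T}"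
      proof
        fix x assume "x \<in> P\<epsilon>"
        then consider "x \<in> P1" | v where "v \<in> J" "x = v - \<eta>" unfolding P\<epsilon>_def by auto
        then show "x \<in> {0..T}"
        proof cases
          case 1 then show ?thesis using P1sub by auto
        next
          case 2 then show ?thesis using \<eta>lt(2)[of v] \<eta>0 Jsub by force
        qed
      qed
      show "0 \<in> P\<epsilon>" "T \<in> P\<epsilon>" unfolding P\<epsilon>_def using P10 P1T by auto
    qed
    show "\<exists>P\<epsilon>. is_partition T P\<epsilon> \<and> (\<forall>P. is_partition T P \<and> P\<epsilon> \<subseteq> P \<longrightarrow>
            \<bar>psum T P (\<lambda>s t. logser n ((W t - W s) / W s)) - K\<bar> < \<epsilon>)"
    proof (intro exI conjI allI impI)
      show "is_partition T P\<epsilon>" by (rule part\<epsilon>)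
      fix P assume "is_partition T P \<and> P\<epsilon> \<subseteq> P"
      then have P: "is_partition T P" and PeP: "P\<epsilon> \<subseteq> P" by auto
      have finP: "finite P" using P unfolding is_partition_def by auto
      have P1P: "P1 \<subseteq> P" using PeP unfolding P\<epsilon>_def by auto
      have sP: "s < T" "0 \<le> s" "nxt P s \<in> P" "s < nxt P s" "nxt P s \<le> T" "s \<in> P"
        "\<And>r. r \<in> P \<Longrightarrow> s < r \<Longrightarrow> nxt P s \<le> r"
        if s: "s \<in> P - {T}" for s
      proof -
        show sT: "s < T" by (rule part_lt[OF P s])
        show "0 \<le> s" using part_ge0[OF P] s by auto
        show "nxt P s \<in> P" "s < nxt P s" "\<And>r. r \<in> P \<Longrightarrow> s < r \<Longrightarrow> nxt P s \<le> r"
          using nxt_props[OF P _ sT] s by auto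
        then show "nxt P s \<le> T" using P unfolding is_partition_def by auto
        show "s \<in> P" using s by simp
      qed
      define \<phi> where "\<phi> s = Rr n ((W (nxt P s) - W s) / W s)" for s
      have e1: "psum T P (\<lambda>s t. logser n ((W t - W s) / W s)) =
                (ln (W T) - ln (W 0)) - (\<Sum>s\<in>P - {T}. \<phi> s)"
      proof -
        have "psum T P (\<lambda>s t. logser n ((W t - W s) / W s)) =
              (\<Sum>s\<in>P - {T}. (ln (W (nxt P s)) - ln (W s)) - \<phi> s)"
          unfolding psum_def
        proof (intro sum.cong refl)
          fix s assume s: "s \<in> P - {T}"
          have "W s > 0" "W (nxt P s) > 0" using Wb[of s] Wb[of "nxt P s"] sP[OF s] m by auto
          then have "ln (1 + (W (nxt P s) - W s) / W s) = ln (W (nxt P s)) - ln (W s)"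
            by (simp add: field_simps ln_div)
          then show "logser n ((W (nxt P s) - W s) / W s) = ln (W (nxt P s)) - ln (W s) - \<phi> s"
            unfolding \<phi>_def Rr_def by simp
        qed
        also have "\<dots> = psum T P (\<lambda>s t. ln (W t) - ln (W s)) - (\<Sum>s\<in>P - {T}. \<phi> s)"
          unfolding psum_def by (simp add: sum_subtractf)
        also have "psum T P (\<lambda>s t. ln (W t) - ln (W s)) = ln (W T) - ln (W 0)"
          by (rule psum_telescope[OF P T])
        finally show ?thesis .
      qed
      define A where "A = {s \<in> P - {T}. nxt P s \<in> J}"
      define B where "B = {s \<in> P - {T}. nxt P s \<notin> J}"
      have finA: "finite A" and finB: "finite B" unfolding A_def B_def using finP by auto
      have AB: "A \<union> B = P - {T}" "A \<inter> B = {}" unfolding A_def B_def by auto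
      have bijA: "bij_betw (nxt P) A J"
      proof (rule bij_betw_imageI)
        show "inj_on (nxt P) A" using nxt_inj[OF P] unfolding A_def by (rule inj_on_subset) auto
        show "nxt P ` A = J"
        proof
          show "nxt P ` A \<subseteq> J" unfolding A_def by auto
          show "J \<subseteq> nxt P ` A"
          proof
            fix v assume v: "v \<in> J"
            then have "v \<in> P" "0 < v" using P1P Jsub unfolding J_def by auto
            then obtain s where "s \<in> P - {T}" "nxt P s = v" using nxt_surj[OF P] by blast
            then show "v \<in> nxt P ` A" unfolding A_def using v by force
          qed
        qed
      qed
      have sumphi: "(\<Sum>s\<in>P - {T}. \<phi> s) = (\<Sum>s\<in>A. \<phi> s) + (\<Sum>s\<in>B. \<phi> s)"
        using sum.union_disjoint[OF finA finB AB(2), of \<phi>] AB(1) by simp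
      have rest_sub: "{0<..T} - J \<subseteq> {0<..T}" by auto
      have SJ: "S = (\<Sum>v\<in>J. jc v) + infsum jc ({0<..T} - J)"
      proof -
        have "{0<..T} = J \<union> ({0<..T} - J)" using Jsub by auto
        then have "S = infsum jc (J \<union> ({0<..T} - J))" unfolding S_def by simp
        also have "\<dots> = infsum jc J + infsum jc ({0<..T} - J)"
          by (rule infsum_Un_disjoint)
             (use summable_on_subset_banach[OF summ2] Jsub in auto)
        also have "infsum jc J = (\<Sum>v\<in>J. jc v)" using finJ by simp
        finally show ?thesis .
      qed
      have sumJ: "(\<Sum>v\<in>J. jc v) = (\<Sum>s\<in>A. jc (nxt P s))"
        using sum.reindex_bij_betw[OF bijA, of jc] by simp
      have key: "psum T P (\<lambda>s t. logser n ((W t - W s) / W s)) - K =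
                 (\<Sum>s\<in>A. jc (nxt P s) - \<phi> s) - (\<Sum>s\<in>B. \<phi> s) + infsum jc ({0<..T} - J)"
        unfolding e1 K_def sumphi SJ sumJ by (simp add: sum_subtractf)
      have b1: "\<bar>\<Sum>s\<in>A. jc (nxt P s) - \<phi> s\<bar> < \<epsilon>/3"
      proof -
        have "\<bar>jc (nxt P s) - \<phi> s\<bar> \<le> C1 * \<delta>2" if s: "s \<in> A" for s
        proof -
          define v where "v = nxt P s"
          have s': "s \<in> P - {T}" and vJ: "v \<in> J" using s unfolding A_def v_def by auto
          have vT: "v \<in> {0<..T}" using vJ Jsub by auto
          have vme: "v - \<eta> \<in> P" using vJ PeP unfolding P\<epsilon>_def by auto
          have sv: "s < v" using sP(4)[OF s'] unfolding v_def .
          have "v - \<eta> \<le> s"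
          proof (rule ccontr)
            assume "\<not> v - \<eta> \<le> s"
            then have "v \<le> v - \<eta>" using sP(7)[OF s' vme] unfolding v_def by simp
            then show False using \<eta>0 by simp
          qed
          then have "\<bar>W s - L v\<bar> < \<delta>2" using \<eta>f(2)[OF vJ, of s] \<eta>lt(1)[OF vJ] sv by simp
          moreover have "\<bar>jc v - \<phi> s\<bar> \<le> C1 * \<bar>L v - W s\<bar>"
          proof -
            have sT': "s \<in> {0..T}" "v \<in> {0..T}" using sP[OF s'] vT by auto
            have "\<bar>Rr n ((W v - W s) / W s) - Rr n ((W v - L v) / L v)\<bar> \<le> C1 * \<bar>L v - W s\<bar>"
              unfolding C1_def by (rule Rr_lip[OF m Wb[OF sT'(1)] Wb[OF sT'(2)] Lb[OF vT]])
            then show ?thesis unfolding jc_eq \<phi>_def v_def by (simp add: abs_minus_commute)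
          qed
          ultimately show ?thesis unfolding v_def using C10
            by (smt (verit, best) abs_minus_commute mult_left_mono)
        qed
        then have "\<bar>\<Sum>s\<in>A. jc (nxt P s) - \<phi> s\<bar> \<le> (\<Sum>s\<in>A. C1 * \<delta>2)"
          by (intro order_trans[OF sum_abs] sum_mono) auto
        also have "\<dots> = C1 * real (card J) * \<delta>2"
          using bij_betw_same_card[OF bijA] by simp
        finally show ?thesis using C1J by linarith
      qed
      have b2: "\<bar>\<Sum>s\<in>B. \<phi> s\<bar> \<le> g \<delta> * V"
      proof -
        have "\<bar>\<phi> s\<bar> \<le> g \<delta> * \<bar>W (nxt P s) - W s\<bar> powr p" if s: "s \<in> B" for s
        proof -
          define t where "t = nxt P s"
          have s': "s \<in> P - {T}" and tJ: "t \<notin> J" using s unfolding B_def t_def by auto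
          have st: "s < t" "0 \<le> s" "t \<le> T" "t \<in> P" using sP[OF s'] unfolding t_def by auto
          have tP1: "t \<notin> P1" using tJ st unfolding J_def by auto
          have "{s<..t} \<inter> P1 = {}"
          proof (rule ccontr)
            assume "{s<..t} \<inter> P1 \<noteq> {}"
            then obtain r where r: "r \<in> P1" "s < r" "r \<le> t" by auto
            then have "r < t" using tP1 by (cases "r = t") auto
            moreover have "t \<le> r" using sP(7)[OF s', of r] r P1P unfolding t_def by auto
            ultimately show False by simp
          qed
          then have "\<bar>W t - W s\<bar> < \<delta>" using gP1' st by blast
          moreover have "s \<in> {0..T}" "t \<in> {0..T}" using st by auto
          ultimately have "\<bar>Rr n ((W t - W s) / W s)\<bar> \<le> g \<delta> * \<bar>W t - W s\<bar> powr p"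
            unfolding g_def e_def
            using Rr_small[OF m Wb[of s] Wb[of t], of \<delta> p n] p0 np by auto
          then show ?thesis unfolding \<phi>_def t_def .
        qed
        then have "\<bar>\<Sum>s\<in>B. \<phi> s\<bar> \<le> (\<Sum>s\<in>B. g \<delta> * \<bar>W (nxt P s) - W s\<bar> powr p)"
          by (intro order_trans[OF sum_abs] sum_mono) auto
        also have "\<dots> = g \<delta> * (\<Sum>s\<in>B. \<bar>W (nxt P s) - W s\<bar> powr p)" by (simp add: sum_distrib_left)
        also have "(\<Sum>s\<in>B. \<bar>W (nxt P s) - W s\<bar> powr p) \<le> (\<Sum>s\<in>P - {T}. \<bar>W (nxt P s) - W s\<bar> powr p)"
          using finP AB by (intro sum_mono2) auto
        also have "\<dots> \<le> V" using V[OF P] unfolding psum_def .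
        finally show ?thesis using g0[of \<delta>] by (simp add: mult_left_mono)
      qed
      have b3: "\<bar>infsum jc ({0<..T} - J)\<bar> \<le> g \<delta> * V"
      proof -
        have sr: "(\<lambda>t. \<bar>jc t\<bar>) summable_on ({0<..T} - J)"
          using summable_on_subset_banach[OF summ rest_sub] .
        have "\<bar>infsum jc ({0<..T} - J)\<bar> \<le> (\<Sum>\<^sub>\<infinity>t\<in>{0<..T} - J. \<bar>jc t\<bar>)"
          using norm_infsum_bound[of jc "{0<..T} - J"] sr by simp
        also have "\<dots> \<le> g \<delta> * V"
        proof (rule infsum_le_finite_sums[OF sr])
          fix F assume F: "finite F" "F \<subseteq> {0<..T} - J"
          show "(\<Sum>t\<in>F. \<bar>jc t\<bar>) \<le> g \<delta> * V"
          proof (rule finbound)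
            show "finite F" "F \<subseteq> {0<..T}" using F by auto
            fix v assume "v \<in> F"
            then have v: "v \<in> {0<..T}" "v \<notin> P1" using F unfolding J_def by auto
            show "\<bar>W v - L v\<bar> \<le> \<delta>" unfolding L_def by (rule jump_small[OF cad gP1 v])
          qed
        qed
        finally show ?thesis .
      qed
      show "\<bar>psum T P (\<lambda>s t. logser n ((W t - W s) / W s)) - K\<bar> < \<epsilon>"
        unfolding key using b1 b2 b3 \<delta>(2) by linarith
    qed
  qed
  have summ': "(\<lambda>t. \<bar>jump_corr (nat \<lfloor>p\<rfloor>) W t\<bar>) summable_on {0<..T}"
    using summ unfolding jc_def n_def .
  show ?thesis
    by (rule exI[of _ K]) (use rrs summ' in \<open>simp add: K_def S_def jc_def n_def\<close>)
qed

theorem proposition4p5: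
  fixes M :: "'a measure" and W :: "'a \<Rightarrow> real \<Rightarrow> real" and p T :: real
  assumes "prob_space M"
    and "1 \<le> p" and "0 < T"
    and "AE \<omega> in M. cadlag_on T (W \<omega>) \<and> (\<forall>t\<in>{0..T}. 0 < W \<omega> t)
                     \<and> finite_pvar p T (W \<omega>)"
    and "AE \<omega> in M. \<exists>m Mx. 0 < m \<and> m \<le> Mx \<and> W \<omega> ` {0..T} \<subseteq> {m..Mx}"
  shows "AE \<omega> in M.
           \<exists>K. rrs_converges T
                  (\<lambda>P. psum T P (\<lambda>s t. logser (nat \<lfloor>p\<rfloor>) ((W \<omega> t - W \<omega> s) / W \<omega> s))) K
             \<and> ((\<lambda>t. \<bar>jump_corr (nat \<lfloor>p\<rfloor>) (W \<omega>) t\<bar>) summable_on {0<..T})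
             \<and> ln (W \<omega> T) - ln (W \<omega> 0) =
                 K + (\<Sum>\<^sub>\<infinity>t\<in>{0<..T}. jump_corr (nat \<lfloor>p\<rfloor>) (W \<omega>) t)"
  using assms(4) assms(5)
proof eventually_elim
  case (elim \<omega>)
  then obtain m Mx where mm: "0 < m" "m \<le> Mx" "W \<omega> ` {0..T} \<subseteq> {m..Mx}" by blast
  have rng: "\<forall>t\<in>{0..T}. W \<omega> t \<in> {m..Mx}" using mm(3) by auto
  show ?case using det[OF assms(2,3) _ _ mm(1) rng] elim by blast
qed

end
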